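(* Let $X,Y$ be Banach spaces, $T:X\to Y$ a bounded linear operator, $1\le p\le 2$ and $c>0$. Then $T$ is uniformly $p$-smooth with constant $c$ if and only if $T$ has strong martingale type $p$ with constant $c$.
   Context: Dyadic setting: for $k=0,1,2,\dots$, $\mathcal F_k$ is the $\sigma$-algebra on $[0,1)$ generated by the dyadic intervals $[i/2^k,(i+1)/2^k)$, $i=0,\dots,2^k-1$ (so $\mathcal F_0$ is trivial), with Lebesgue measure. A sequence $d_1,\dots,d_n$ of $X$-valued functions on $[0,1)$ is a sequence of differences of a dyadic martingale if each $d_k$ is $\mathcal F_k$-measurable and $\mathbb E(d_k\mid\mathcal F_{k-1})=0$. For $f:[0,1)\to X$, $\|f|L_p\|=(\int_0^1\|f(t)\|^p\,dt)^{1/p}$. $T$ is uniformly $p$-smooth with constant $c$ if for all $x\in X$, $y\in Y$: $\left(\frac{\|y+Tx\|^p+\|y-Tx\|^p}{2}-\|y\|^p\right)^{1/p}\le c\|x\|$. $T$ has strong martingale type $p$ with constant $c$ if for all $n\in\mathbb N$, all $y\in Y$ and all sequences $d_1,\dots,d_n$ of $X$-valued differences of dyadic martingales: $\left\|y+\sum_{k=1}^nTd_k\Big|L_p\right\|\le\left(\|y\|^p+c^p\sum_{k=1}^n\|d_k|L_p\|^p\right)^{1/p}$. *)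

theory Defs
  imports "HOL-Analysis.Analysis"
begin

definition dyadic_filtration :: "nat \<Rightarrow> real measure" where
  "dyadic_filtration k =
     sigma {0..<1} {{real i / 2^k ..< real (i+1) / 2^k} | i. i < 2^k}"

text \<open>d_1,...,d_n is a sequence of differences of a dyadic martingale: d_k is
  F_k-measurable and E(d_k | F_(k-1)) = 0, i.e. the integral of d_k over every
  set of F_(k-1) vanishes. (The integral is the Henstock-Kurzweil integral,
  which is available for arbitrary Banach-space-valued functions and agrees with
  the Lebesgue/Bochner integral for these step functions.)\<close>
definition dyadic_mart_diffs :: "nat \<Rightarrow> (nat \<Rightarrow> real \<Rightarrow> 'a::banach) \<Rightarrow> bool" where
  "dyadic_mart_diffs n d \<longleftrightarrow>
     (\<forall>k\<in>{1..n}. d k \<in> borel_measurable (dyadic_filtration k) \<and>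
        (\<forall>A\<in>sets (dyadic_filtration (k - 1)). (d k has_integral 0) A))"

definition Lp_norm :: "real \<Rightarrow> (real \<Rightarrow> 'a::real_normed_vector) \<Rightarrow> real" where
  "Lp_norm p f = (integral {0..<1} (\<lambda>t. norm (f t) powr p)) powr (1 / p)"

definition unif_p_smooth ::
    "('a::real_normed_vector \<Rightarrow> 'b::real_normed_vector) \<Rightarrow> real \<Rightarrow> real \<Rightarrow> bool" where
  "unif_p_smooth T p c \<longleftrightarrow>
     (\<forall>x y. ((norm (y + T x) powr p + norm (y - T x) powr p) / 2 - norm y powr p) powr (1 / p)
             \<le> c * norm x)"

definition strong_mart_type ::
    "('a::banach \<Rightarrow> 'b::real_normed_vector) \<Rightarrow> real \<Rightarrow> real \<Rightarrow> bool" where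
  "strong_mart_type T p c \<longleftrightarrow>
     (\<forall>n::nat. \<forall>y::'b. \<forall>d. dyadic_mart_diffs n d \<longrightarrow>
        Lp_norm p (\<lambda>t. y + (\<Sum>k=1..n. T (d k t)))
          \<le> (norm y powr p + c powr p * (\<Sum>k=1..n. Lp_norm p (d k) powr p)) powr (1 / p))"

end

theory Submission
  imports Defs
begin


lemma const_Ico_has_integral:
  fixes v :: "'a::banach" and a b :: real
  assumes "a \<le> b" "\<And>t. t \<in> {a..<b} \<Longrightarrow> h t = v"
  shows "(h has_integral ((b - a) *\<^sub>R v)) {a..<b}"
proof -
  have "((\<lambda>t. v) has_integral ((b - a) *\<^sub>R v)) {a..b}"
    using has_integral_const_real[of v a b] assms(1) by simp
  moreover have "negligible {x \<in> {a..b} - {a..<b}. v \<noteq> 0}"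
    by (rule negligible_subset[of "{b}"]) auto
  moreover have "negligible {x \<in> {a..<b} - {a..b}. v \<noteq> 0}"
    by (rule negligible_subset[of "{}"]) auto
  ultimately have "((\<lambda>t. v) has_integral ((b - a) *\<^sub>R v)) {a..<b}"
    using has_integral_spike_set_eq[of "{a..b}" "{a..<b}" "\<lambda>t. v"] by simp
  then show ?thesis using has_integral_eq[of "{a..<b}" "\<lambda>t. v" h] assms(2) by auto
qed

lemma step_has_integral:
  fixes h :: "real \<Rightarrow> 'a::banach"
  assumes "\<forall>i<N. x i \<le> x (Suc i)" "\<forall>i<N. \<forall>t\<in>{x i..<x (Suc i)}. h t = v i"
  shows "(h has_integral (\<Sum>i<N. (x (Suc i) - x i) *\<^sub>R v i)) {x 0..<x N} \<and> x 0 \<le> x N"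
  using assms
proof (induction N)
  case 0
  then show ?case by simp
next
  case (Suc N)
  then have IH: "(h has_integral (\<Sum>i<N. (x (Suc i) - x i) *\<^sub>R v i)) {x 0..<x N}" "x 0 \<le> x N"
    by auto
  have le: "x N \<le> x (Suc N)" using Suc.prems by auto
  have c: "(h has_integral ((x (Suc N) - x N) *\<^sub>R v N)) {x N..<x (Suc N)}"
    using Suc.prems by (intro const_Ico_has_integral) auto
  have "(h has_integral ((\<Sum>i<N. (x (Suc i) - x i) *\<^sub>R v i) + (x (Suc N) - x N) *\<^sub>R v N))
          ({x 0..<x N} \<union> {x N..<x (Suc N)})"
    by (rule has_integral_Un[OF IH(1) c]) auto
  moreover have "{x 0..<x N} \<union> {x N..<x (Suc N)} = {x 0..<x (Suc N)}"
    using IH(2) le by auto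
  ultimately show ?case using IH(2) le by simp
qed


definition atom :: "nat \<Rightarrow> nat \<Rightarrow> real set" where
  "atom k i = {real i / 2^k ..< real (i+1) / 2^k}"

definition gens :: "nat \<Rightarrow> real set set" where
  "gens k = {{real i / 2^k ..< real (i+1) / 2^k} | i. i < 2^k}"

definition const_lvl :: "nat \<Rightarrow> (real \<Rightarrow> 'b) \<Rightarrow> bool" where
  "const_lvl l f \<longleftrightarrow> (\<forall>i<2^l. \<forall>t\<in>atom l i. f t = f (real i / 2^l))"

lemma atom_start: "real i / 2^k \<in> atom k i"
  unfolding atom_def by (simp add: divide_strict_right_mono)

lemma atom_sub: "i < 2^k \<Longrightarrow> atom k i \<subseteq> {0..<1}"
proof -
  assume "i < 2^k"
  then have "real (i+1) \<le> 2^k"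
    by (metis Suc_eq_plus1 Suc_leI of_nat_le_iff of_nat_numeral of_nat_power)
  then have "real (i+1) / 2^k \<le> 1" by simp
  then show ?thesis unfolding atom_def by auto
qed

lemma atom_disj:
  assumes "i \<noteq> j" shows "atom k i \<inter> atom k j = {}"
proof (rule ccontr)
  assume "atom k i \<inter> atom k j \<noteq> {}"
  then obtain t where "t \<in> atom k i" "t \<in> atom k j" by blast
  then have "real i / 2^k \<le> t" "t < real (i+1) / 2^k"
     "real j / 2^k \<le> t" "t < real (j+1) / 2^k"
    unfolding atom_def by auto
  then have "real i / 2^k < real (j+1) / 2^k" "real j / 2^k < real (i+1) / 2^k" by auto
  then have "real i < real (j+1)" "real j < real (i+1)"
    by (simp_all add: divide_strict_right_mono_neg divide_less_cancel)
  then show False using assms by linarith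
qed

lemma gens_eq: "gens k = atom k ` {..<2^k}"
  unfolding gens_def atom_def by auto

lemma gens_Pow: "gens k \<subseteq> Pow {0..<1}"
  using atom_sub unfolding gens_eq by auto

lemma sets_dyadic: "sets (dyadic_filtration k) = sigma_sets {0..<1} (gens k)"
  unfolding dyadic_filtration_def gens_def[symmetric] using sets_measure_of[OF gens_Pow] by simp

lemma space_dyadic: "space (dyadic_filtration k) = {0..<1}"
  unfolding dyadic_filtration_def gens_def[symmetric] using space_measure_of[OF gens_Pow] by simp

lemma atom_in_sets: "i < 2^k \<Longrightarrow> atom k i \<in> sets (dyadic_filtration k)"
  unfolding sets_dyadic gens_eq by auto

lemma sigma_atoms:
  assumes "S \<in> sigma_sets {0..<1} (gens k)" "i < 2^k"
  shows "atom k i \<subseteq> S \<or> atom k i \<inter> S = {}"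
  using assms(1)
proof (induction rule: sigma_sets.induct)
  case (Basic a)
  then obtain j where "a = atom k j" unfolding gens_eq by auto
  then show ?case using atom_disj[of i j k] by (cases "i = j") auto
next
  case Empty
  then show ?case by simp
next
  case (Compl a)
  then show ?case using atom_sub[OF assms(2)] by blast
next
  case (Union a)
  then show ?case by blast
qed

lemma sets_atoms:
  assumes "S \<in> sets (dyadic_filtration k)" "i < 2^k"
  shows "atom k i \<subseteq> S \<or> atom k i \<inter> S = {}"
  using sigma_atoms assms sets_dyadic by metis

lemma meas_const:
  fixes f :: "real \<Rightarrow> 'a::t1_space"
  assumes "f \<in> borel_measurable (dyadic_filtration k)"
  shows "const_lvl k f"
  unfolding const_lvl_def
proof (intro allI impI ballI)
  fix i t assume i: "i < 2^k" and t: "t \<in> atom k i"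
  let ?c = "real i / 2^k"
  have "{f ?c} \<in> sets borel" by simp
  then have S: "f -` {f ?c} \<inter> space (dyadic_filtration k) \<in> sets (dyadic_filtration k)"
    using measurable_sets[OF assms] by blast
  have "?c \<in> f -` {f ?c} \<inter> space (dyadic_filtration k)"
    using atom_start[of i k] atom_sub[OF i] space_dyadic by auto
  then have "atom k i \<subseteq> f -` {f ?c} \<inter> space (dyadic_filtration k)"
    using sets_atoms[OF S i] atom_start[of i k] by blast
  then show "f t = f ?c" using t by auto
qed

lemma atom_Suc_sub: "atom (Suc l) i \<subseteq> atom l (i div 2)"
proof -
  let ?q = "i div 2"
  have a: "real (2 * ?q) \<le> real i" "real (i+1) \<le> real (2 * ?q + 2)" by linarith+
  have e1: "real ?q / 2^l = real (2 * ?q) / 2^Suc l" by simp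
  have e2: "real (?q + 1) / 2^l = real (2 * ?q + 2) / 2^Suc l" by (simp add: field_simps)
  have "real (2 * ?q) / 2^Suc l \<le> real i / 2^Suc l"
    using a(1) by (intro divide_right_mono) auto
  moreover have "real (i+1) / 2^Suc l \<le> real (2 * ?q + 2) / 2^Suc l"
    using a(2) by (intro divide_right_mono) auto
  ultimately show ?thesis unfolding atom_def e1 e2 by auto
qed

lemma const_lvl_Suc:
  assumes "const_lvl l f" shows "const_lvl (Suc l) f"
  unfolding const_lvl_def
proof (intro allI impI ballI)
  fix i t assume i: "i < 2^Suc l" and t: "t \<in> atom (Suc l) i"
  have q: "i div 2 < 2^l" using i by auto
  have "f t = f (real (i div 2) / 2^l)"
    using assms q t atom_Suc_sub unfolding const_lvl_def by blast
  moreover have "f (real i / 2^Suc l) = f (real (i div 2) / 2^l)"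
    using assms q atom_Suc_sub atom_start[of i "Suc l"] unfolding const_lvl_def by blast
  ultimately show "f t = f (real i / 2^Suc l)" by simp
qed

lemma const_lvl_mono:
  assumes "k \<le> l" "const_lvl k f" shows "const_lvl l f"
  using assms
proof (induction l rule: dec_induct)
  case base then show ?case by simp
next
  case (step n) then show ?case using const_lvl_Suc by blast
qed

lemma const_lvl_comb:
  assumes "const_lvl l f" "const_lvl l g"
  shows "const_lvl l (\<lambda>t. F (f t) (g t))"
  using assms unfolding const_lvl_def by auto

lemma const_lvl_comp:
  assumes "const_lvl l f"
  shows "const_lvl l (\<lambda>t. F (f t))"
  using assms unfolding const_lvl_def by auto


lemma const_lvl_integral:
  fixes h :: "real \<Rightarrow> 'a::banach"
  assumes "const_lvl m h"
  shows "(h has_integral (\<Sum>i<2^m. (1/2^m) *\<^sub>R h (real i / 2^m))) {0..<1}"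
proof -
  let ?x = "\<lambda>i::nat. real i / 2^m"
  have "(h has_integral (\<Sum>i<2^m. (?x (Suc i) - ?x i) *\<^sub>R h (?x i))) {?x 0..<?x (2^m)} \<and> ?x 0 \<le> ?x (2^m)"
  proof (rule step_has_integral)
    show "\<forall>i<2^m. ?x i \<le> ?x (Suc i)" by (simp add: divide_right_mono)
    show "\<forall>i<2^m. \<forall>t\<in>{?x i..<?x (Suc i)}. h t = h (?x i)"
    proof (intro allI impI ballI)
      fix i t assume i: "i < (2::nat)^m" and t: "t \<in> {?x i..<?x (Suc i)}"
      then have "t \<in> atom m i" unfolding atom_def by simp
      then show "h t = h (?x i)" using assms i unfolding const_lvl_def by blast
    qed
  qed
  moreover have "?x (Suc i) - ?x i = 1/2^m" for i
    by (metis diff_divide_distrib of_nat_Suc add_diff_cancel_right')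
  ultimately show ?thesis by simp
qed

lemma mart_pair:
  fixes f :: "real \<Rightarrow> 'a::banach"
  assumes c: "const_lvl (Suc m) f" and z: "\<forall>A\<in>sets (dyadic_filtration m). (f has_integral 0) A"
    and j: "j < 2^m"
  shows "f (real (2*j+1) / 2^Suc m) = - f (real (2*j) / 2^Suc m)"
proof -
  let ?x = "\<lambda>i::nat. real (2*j+i) / 2^Suc m"
  have "(f has_integral (\<Sum>i<2. (?x (Suc i) - ?x i) *\<^sub>R f (?x i))) {?x 0..<?x 2} \<and> ?x 0 \<le> ?x 2"
  proof (rule step_has_integral)
    show "\<forall>i<2. ?x i \<le> ?x (Suc i)" by (simp add: divide_right_mono)
    show "\<forall>i<2. \<forall>t\<in>{?x i..<?x (Suc i)}. f t = f (?x i)"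
    proof (intro allI impI ballI)
      fix i t assume i: "i < (2::nat)" and t: "t \<in> {?x i..<?x (Suc i)}"
      have "2*j+i < 2^Suc m" using i j by auto
      moreover have "t \<in> atom (Suc m) (2*j+i)" using t unfolding atom_def by simp
      ultimately show "f t = f (?x i)" using c unfolding const_lvl_def by blast
    qed
  qed
  moreover have "{?x 0..<?x 2} = atom m j"
  proof -
    have "?x 0 = real j / 2^m" by simp
    moreover have "?x 2 = real (j+1) / 2^m"
    proof -
      have "?x 2 = (2 * real (j+1)) / (2 * 2^m)" by simp
      also have "\<dots> = real (j+1) / 2^m" by (rule mult_divide_mult_cancel_left) simp
      finally show ?thesis .
    qed
    ultimately show ?thesis unfolding atom_def by simp
  qed
  ultimately have I: "(f has_integral (\<Sum>i<2. (?x (Suc i) - ?x i) *\<^sub>R f (?x i))) (atom m j)"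
    by simp
  have "(f has_integral 0) (atom m j)" using z atom_in_sets[OF j] by blast
  then have S0: "(\<Sum>i<2. (?x (Suc i) - ?x i) *\<^sub>R f (?x i)) = 0"
    using I has_integral_unique by blast
  define g where "g i = (?x (Suc i) - ?x i) *\<^sub>R f (?x i)" for i
  have D: "?x (Suc i) - ?x i = 1/2^Suc m" for i
    by (metis diff_divide_distrib of_nat_Suc add_Suc_right add_diff_cancel_right')
  have "(\<Sum>i<2. g i) = g 0 + g 1" by (simp add: numeral_2_eq_2)
  also have "\<dots> = (1/2^Suc m) *\<^sub>R (f (?x 0) + f (?x 1))"
  proof -
    have G: "g i = (1/2^Suc m) *\<^sub>R f (?x i)" for i by (simp only: g_def D)
    show ?thesis unfolding G by (simp only: scaleR_add_right)
  qed
  finally have "(1/2^Suc m) *\<^sub>R (f (?x 0) + f (?x 1)) = 0"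
    using S0 unfolding g_def by simp
  then have "f (?x 0) + f (?x 1) = 0" by simp
  then show ?thesis by (simp add: eq_neg_iff_add_eq_0 add.commute)
qed

lemma sum_pairs: "(\<Sum>i<2*(N::nat). g i) = (\<Sum>j<N. g (2*j) + g (2*j+1))"
  by (induction N) (simp_all add: add.assoc)


lemma mid_convex:
  fixes a b p :: real
  assumes p: "1 \<le> p" and a: "0 \<le> a" and b: "0 \<le> b"
  shows "((a + b) / 2) powr p \<le> (a powr p + b powr p) / 2"
proof -
  have two: "2 \<le> (2::real) powr p" using powr_mono[OF p, of 2] by simp
  have half: "(x / 2) powr p \<le> x powr p / 2" if "0 \<le> x" for x :: real
  proof -
    have "(x / 2) powr p = x powr p / 2 powr p" by (rule powr_divide)
    also have "\<dots> \<le> x powr p / 2"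
      using two by (intro divide_left_mono) auto
    finally show ?thesis .
  qed
  show ?thesis
  proof (cases "a = 0 \<or> b = 0")
    case True
    then show ?thesis
    proof
      assume "a = 0" then show ?thesis using half[OF b] by simp
    next
      assume "b = 0" then show ?thesis using half[OF a] by simp
    qed
  next
    case False
    then have "a \<in> {0<..}" "b \<in> {0<..}" using a b by auto
    from convex_onD[OF powr_convex[OF p], of "1/2", OF _ _ this]
    have "((1 - 1/2) *\<^sub>R a + (1/2) *\<^sub>R b) powr p \<le> (1 - 1/2) * a powr p + (1/2) * b powr p"
      by simp
    moreover have "(1 - 1/2) *\<^sub>R a + (1/2) *\<^sub>R b = (a + b) / 2" by simp
    moreover have "(1 - 1/2) * a powr p + (1/2) * b powr p = (a powr p + b powr p) / 2" by simp
    ultimately show ?thesis by metis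
  qed
qed

lemma smooth_nonneg:
  fixes z w :: "'b::real_normed_vector"
  assumes p: "1 \<le> p"
  shows "norm z powr p \<le> (norm (z + w) powr p + norm (z - w) powr p) / 2"
proof -
  have e: "(z + w) + (z - w) = 2 *\<^sub>R z" by (simp add: scaleR_2)
  have "2 * norm z = norm ((z + w) + (z - w))" unfolding e by simp
  also have "\<dots> \<le> norm (z + w) + norm (z - w)" by (rule norm_triangle_ineq)
  finally have "norm z \<le> (norm (z + w) + norm (z - w)) / 2" by simp
  then have "norm z powr p \<le> ((norm (z + w) + norm (z - w)) / 2) powr p"
    using p by (intro powr_mono2) auto
  also have "\<dots> \<le> (norm (z + w) powr p + norm (z - w) powr p) / 2"
    using p by (intro mid_convex) auto
  finally show ?thesis .
qed

lemma root_le_iff: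
  fixes X Y p :: real
  assumes "0 < p" "0 \<le> X" "0 \<le> Y"
  shows "X powr (1/p) \<le> Y \<longleftrightarrow> X \<le> Y powr p"
proof
  assume "X powr (1/p) \<le> Y"
  then have "(X powr (1/p)) powr p \<le> Y powr p" using assms by (intro powr_mono2) auto
  then show "X \<le> Y powr p" using assms by (simp add: powr_powr)
next
  assume "X \<le> Y powr p"
  then have "X powr (1/p) \<le> (Y powr p) powr (1/p)" using assms by (intro powr_mono2) auto
  then show "X powr (1/p) \<le> Y" using assms by (simp add: powr_powr)
qed

lemma smooth_iff:
  assumes p: "1 \<le> p" and c: "0 < c"
  shows "unif_p_smooth T p c \<longleftrightarrow>
    (\<forall>x z. (norm (z + T x) powr p + norm (z - T x) powr p) / 2 \<le> norm z powr p + c powr p * norm x powr p)"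
proof -
  have "((norm (z + T x) powr p + norm (z - T x) powr p) / 2 - norm z powr p) powr (1/p) \<le> c * norm x
     \<longleftrightarrow> (norm (z + T x) powr p + norm (z - T x) powr p) / 2 \<le> norm z powr p + c powr p * norm x powr p"
    for x z
  proof -
    have "((norm (z + T x) powr p + norm (z - T x) powr p) / 2 - norm z powr p) powr (1/p) \<le> c * norm x
      \<longleftrightarrow> (norm (z + T x) powr p + norm (z - T x) powr p) / 2 - norm z powr p \<le> (c * norm x) powr p"
      using smooth_nonneg[OF p, of z "T x"] p c by (intro root_le_iff) auto
    then show ?thesis by (simp add: powr_mult algebra_simps)
  qed
  then show ?thesis unfolding unif_p_smooth_def by blast
qed


lemma fwd_main:
  fixes T :: "'a::banach \<Rightarrow> 'b::banach" and d :: "nat \<Rightarrow> real \<Rightarrow> 'a"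
  assumes bl: "bounded_linear T" and p: "1 \<le> p"
    and sm: "\<forall>x z. (norm (z + T x) powr p + norm (z - T x) powr p) / 2 \<le> norm z powr p + c powr p * norm x powr p"
    and cst: "\<forall>k\<in>{1..n}. const_lvl k (d k)"
    and pr: "\<forall>k\<in>{1..n}. \<forall>j<2^(k-1). d k (real (2*j+1) / 2^k) = - d k (real (2*j) / 2^k)"
  shows "m \<le> n \<Longrightarrow> const_lvl m (\<lambda>t. y + (\<Sum>k=1..m. T (d k t))) \<and>
     integral {0..<1} (\<lambda>t. norm (y + (\<Sum>k=1..m. T (d k t))) powr p)
       \<le> norm y powr p + c powr p * (\<Sum>k=1..m. integral {0..<1} (\<lambda>t. norm (d k t) powr p))"
proof (induction m)
  case 0
  have c0: "const_lvl 0 (\<lambda>t. y + (\<Sum>k=1..0. T (d k t)))" unfolding const_lvl_def by simp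
  from const_lvl_integral[OF const_lvl_comp[OF c0, of "\<lambda>v. norm v powr p"]]
  have "integral {0..<1} (\<lambda>t. norm (y + (\<Sum>k=1..0. T (d k t))) powr p) = norm y powr p"
    by (simp add: integral_unique)
  then show ?case using c0 by simp
next
  case (Suc m)
  then have mn: "m \<le> n" and IH: "const_lvl m (\<lambda>t. y + (\<Sum>k=1..m. T (d k t)))"
     "integral {0..<1} (\<lambda>t. norm (y + (\<Sum>k=1..m. T (d k t))) powr p)
       \<le> norm y powr p + c powr p * (\<Sum>k=1..m. integral {0..<1} (\<lambda>t. norm (d k t) powr p))"
    by auto
  define S where "S t = y + (\<Sum>k=1..m. T (d k t))" for t
  define e where "e = d (Suc m)"
  have S': "y + (\<Sum>k=1..Suc m. T (d k t)) = S t + T (e t)" for t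
    unfolding S_def e_def by (auto simp: add.assoc)
  have cS: "const_lvl m S" using IH(1) unfolding S_def .
  have cS1: "const_lvl (Suc m) S" using const_lvl_Suc[OF cS] .
  have ce: "const_lvl (Suc m) e" using cst Suc.prems unfolding e_def by auto
  have pe: "\<forall>j<2^m. e (real (2*j+1) / 2^Suc m) = - e (real (2*j) / 2^Suc m)"
  proof -
    have "Suc m \<in> {1..n}" using Suc.prems by simp
    from bspec[OF pr this] show ?thesis unfolding e_def by simp
  qed
  have cSe: "const_lvl (Suc m) (\<lambda>t. S t + T (e t))" by (rule const_lvl_comb[OF cS1 ce])
  define F' where "F' t = norm (S t + T (e t)) powr p" for t
  define F where "F t = norm (S t) powr p" for t
  define G where "G t = norm (e t) powr p" for t
  define u where "u i = real i / 2^Suc m" for i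
  have IF': "integral {0..<1} F' = (\<Sum>i<2^Suc m. (1/2^Suc m) * F' (u i))"
    using const_lvl_integral[OF const_lvl_comp[OF cSe, of "\<lambda>v. norm v powr p"]]
    unfolding F'_def u_def by (simp add: integral_unique)
  have IF: "integral {0..<1} F = (\<Sum>j<2^m. (1/2^m) * F (real j / 2^m))"
    using const_lvl_integral[OF const_lvl_comp[OF cS, of "\<lambda>v. norm v powr p"]]
    unfolding F_def by (simp add: integral_unique)
  have IG: "integral {0..<1} G = (\<Sum>i<2^Suc m. (1/2^Suc m) * G (u i))"
    using const_lvl_integral[OF const_lvl_comp[OF ce, of "\<lambda>v. norm v powr p"]]
    unfolding G_def u_def by (simp add: integral_unique)
  have pw: "(1/2^Suc m) * F' (u (2*j)) + (1/2^Suc m) * F' (u (2*j+1))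
      \<le> (1/2^m) * F (real j / 2^m) + c powr p * ((1/2^Suc m) * G (u (2*j)) + (1/2^Suc m) * G (u (2*j+1)))"
    if j: "j < 2^m" for j
  proof -
    define z where "z = S (real j / 2^m)"
    define a where "a = e (u (2*j))"
    have "u (2*j) \<in> atom m j" using atom_Suc_sub[of m "2*j"] atom_start[of "2*j" "Suc m"]
      unfolding u_def by auto
    then have z1: "S (u (2*j)) = z" using cS j unfolding const_lvl_def z_def by blast
    have "u (2*j+1) \<in> atom m j" using atom_Suc_sub[of m "2*j+1"] atom_start[of "2*j+1" "Suc m"]
      unfolding u_def by auto
    then have z2: "S (u (2*j+1)) = z" using cS j unfolding const_lvl_def z_def by blast
    have a2: "e (u (2*j+1)) = - a" using pe j unfolding a_def u_def by auto
    have Tm: "T (- a) = - T a" using bl by (simp add: linear_simps)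
    have "F' (u (2*j)) + F' (u (2*j+1)) = norm (z + T a) powr p + norm (z - T a) powr p"
      unfolding F'_def z1 z2 a2 by (simp add: Tm a_def[symmetric])
    also have "\<dots> \<le> 2 * (norm z powr p + c powr p * norm a powr p)"
      using spec[OF spec[OF sm, of a], of z] by (simp add: field_simps)
    finally have A: "F' (u (2*j)) + F' (u (2*j+1)) \<le> 2 * (norm z powr p + c powr p * norm a powr p)" .
    have B: "G (u (2*j)) + G (u (2*j+1)) = 2 * norm a powr p"
      unfolding G_def a2 a_def by simp
    have C: "F (real j / 2^m) = norm z powr p" unfolding F_def z_def ..
    have "(1/2^Suc m) * F' (u (2*j)) + (1/2^Suc m) * F' (u (2*j+1))
        = (1/2^Suc m) * (F' (u (2*j)) + F' (u (2*j+1)))" by (simp add: algebra_simps)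
    also have "\<dots> \<le> (1/2^Suc m) * (2 * (norm z powr p + c powr p * norm a powr p))"
      using A by (intro mult_left_mono) auto
    also have "\<dots> = (1/2^m) * F (real j / 2^m) + c powr p * ((1/2^Suc m) * (G (u (2*j)) + G (u (2*j+1))))"
      unfolding B C by (simp add: algebra_simps)
    finally show ?thesis by (simp add: algebra_simps)
  qed
  have "integral {0..<1} F' = (\<Sum>j<2^m. (1/2^Suc m) * F' (u (2*j)) + (1/2^Suc m) * F' (u (2*j+1)))"
    unfolding IF' power_Suc sum_pairs ..
  also have "\<dots> \<le> (\<Sum>j<2^m. (1/2^m) * F (real j / 2^m) + c powr p * ((1/2^Suc m) * G (u (2*j)) + (1/2^Suc m) * G (u (2*j+1))))"
    using pw by (intro sum_mono) auto
  also have "\<dots> = integral {0..<1} F + c powr p * integral {0..<1} G"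
    unfolding IF IG power_Suc sum_pairs by (simp add: sum.distrib sum_distrib_left distrib_left)
  finally have step: "integral {0..<1} F' \<le> integral {0..<1} F + c powr p * integral {0..<1} G" .
  have "integral {0..<1} F \<le> norm y powr p + c powr p * (\<Sum>k=1..m. integral {0..<1} (\<lambda>t. norm (d k t) powr p))"
    using IH(2) unfolding F_def S_def .
  with step have "integral {0..<1} F' \<le> norm y powr p + c powr p * (\<Sum>k=1..Suc m. integral {0..<1} (\<lambda>t. norm (d k t) powr p))"
    unfolding G_def e_def by (simp add: algebra_simps)
  then show ?case using cSe unfolding S' F'_def by simp
qed


lemma integral_step_nonneg:
  fixes h :: "real \<Rightarrow> real"
  assumes "const_lvl m h" "\<And>t. 0 \<le> h t"
  shows "0 \<le> integral {0..<1} h"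
proof -
  have "integral {0..<1} h = (\<Sum>i<2^m. (1/2^m) *\<^sub>R h (real i / 2^m))"
    using const_lvl_integral[OF assms(1)] by (rule integral_unique)
  also have "\<dots> \<ge> 0" using assms(2) by (intro sum_nonneg) auto
  finally show ?thesis .
qed

lemma Lp_pow:
  fixes h :: "real \<Rightarrow> 'a::real_normed_vector"
  assumes "const_lvl m h" "0 < p"
  shows "Lp_norm p h powr p = integral {0..<1} (\<lambda>t. norm (h t) powr p)"
proof -
  have "0 \<le> integral {0..<1} (\<lambda>t. norm (h t) powr p)"
    by (rule integral_step_nonneg[OF const_lvl_comp[OF assms(1)]]) auto
  then show ?thesis unfolding Lp_norm_def using assms(2) by (simp add: powr_powr)
qed

lemma forward:
  fixes T :: "'a::banach \<Rightarrow> 'b::banach"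
  assumes bl: "bounded_linear T" and p: "1 \<le> p" and c: "0 < c"
    and sm: "unif_p_smooth T p c"
  shows "strong_mart_type T p c"
  unfolding strong_mart_type_def
proof (intro allI impI)
  fix n :: nat and y :: 'b and d :: "nat \<Rightarrow> real \<Rightarrow> 'a"
  assume D: "dyadic_mart_diffs n d"
  have sm': "\<forall>x z. (norm (z + T x) powr p + norm (z - T x) powr p) / 2 \<le> norm z powr p + c powr p * norm x powr p"
    using sm smooth_iff[OF p c] by blast
  have cst: "\<forall>k\<in>{1..n}. const_lvl k (d k)"
    using D meas_const unfolding dyadic_mart_diffs_def by blast
  have pr: "\<forall>k\<in>{1..n}. \<forall>j<2^(k-1). d k (real (2*j+1) / 2^k) = - d k (real (2*j) / 2^k)"
  proof (intro ballI allI impI)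
    fix k j :: nat assume k: "k \<in> {1..n}" and j: "j < 2^(k-1)"
    then obtain m where km: "k = Suc m" by (cases k) auto
    have "const_lvl (Suc m) (d k)" using cst k km by simp
    moreover have "\<forall>A\<in>sets (dyadic_filtration m). (d k has_integral 0) A"
      using D k km unfolding dyadic_mart_diffs_def by auto
    ultimately show "d k (real (2*j+1) / 2^k) = - d k (real (2*j) / 2^k)"
      using mart_pair[of m "d k" j] j km by simp
  qed
  from fwd_main[OF bl p sm' cst pr, of n y]
  have M: "const_lvl n (\<lambda>t. y + (\<Sum>k=1..n. T (d k t)))"
     "integral {0..<1} (\<lambda>t. norm (y + (\<Sum>k=1..n. T (d k t))) powr p)
       \<le> norm y powr p + c powr p * (\<Sum>k=1..n. integral {0..<1} (\<lambda>t. norm (d k t) powr p))"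
    by auto
  have nn: "0 \<le> integral {0..<1} (\<lambda>t. norm (y + (\<Sum>k=1..n. T (d k t))) powr p)"
    by (rule integral_step_nonneg[OF const_lvl_comp[OF M(1)]]) auto
  have eq: "(\<Sum>k=1..n. Lp_norm p (d k) powr p) = (\<Sum>k=1..n. integral {0..<1} (\<lambda>t. norm (d k t) powr p))"
  proof (rule sum.cong)
    fix k assume "k \<in> {1..n}"
    then have "const_lvl k (d k)" using cst by blast
    then show "Lp_norm p (d k) powr p = integral {0..<1} (\<lambda>t. norm (d k t) powr p)"
      using Lp_pow[of k "d k" p] p by simp
  qed simp
  show "Lp_norm p (\<lambda>t. y + (\<Sum>k=1..n. T (d k t)))
      \<le> (norm y powr p + c powr p * (\<Sum>k=1..n. Lp_norm p (d k) powr p)) powr (1 / p)"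
    unfolding Lp_norm_def[of p "\<lambda>t. y + (\<Sum>k=1..n. T (d k t))"] eq
    using M(2) nn p by (intro powr_mono2) auto
qed

lemma backward:
  fixes T :: "'a::banach \<Rightarrow> 'b::banach"
  assumes bl: "bounded_linear T" and p: "1 \<le> p" and c: "0 < c"
    and st: "strong_mart_type T p c"
  shows "unif_p_smooth T p c"
  unfolding smooth_iff[OF p c]
proof (intro allI)
  fix x :: 'a and z :: 'b
  define d :: "nat \<Rightarrow> real \<Rightarrow> 'a" where "d k t = (if t \<in> {..<1/2} then x else - x)" for k t
  have meas: "d 1 \<in> borel_measurable (dyadic_filtration 1)"
  proof -
    have "{..<1/2} \<inter> space (dyadic_filtration 1) = atom 1 0"
      unfolding space_dyadic atom_def by auto
    then have "{..<1/2} \<inter> space (dyadic_filtration 1) \<in> sets (dyadic_filtration 1)"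
      using atom_in_sets[of 0 1] by simp
    then show ?thesis unfolding d_def[abs_def] by (intro measurable_If_set) auto
  qed
  have c1: "const_lvl 1 (d 1)" by (rule meas_const[OF meas])
  have d0: "d 1 (real 0 / 2^1) = x" and d1: "d 1 (real 1 / 2^1) = - x" unfolding d_def by auto
  have "(d 1 has_integral 0) {0..<1}"
  proof -
    have "(d 1 has_integral (\<Sum>i<2^1. (1/2^1) *\<^sub>R d 1 (real i / 2^1))) {0..<1}"
      by (rule const_lvl_integral[OF c1])
    moreover have "(\<Sum>i<2^1. (1/2^1) *\<^sub>R d 1 (real i / 2^1)) = (0::'a)"
      using d0 d1 by (simp add: numeral_2_eq_2)
    ultimately show ?thesis by simp
  qed
  moreover have "A = {} \<or> A = {0..<1}" if "A \<in> sets (dyadic_filtration 0)" for A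
  proof -
    have "A \<subseteq> {0..<1}" using sets.sets_into_space[OF that] space_dyadic by auto
    moreover have "atom 0 0 = {0..<1}" unfolding atom_def by simp
    ultimately show ?thesis using sets_atoms[OF that, of 0] by auto
  qed
  ultimately have mart: "dyadic_mart_diffs 1 d"
    unfolding dyadic_mart_diffs_def using meas by auto
  have L: "Lp_norm p (\<lambda>t. z + (\<Sum>k=1..1. T (d k t)))
      \<le> (norm z powr p + c powr p * (\<Sum>k=1..1. Lp_norm p (d k) powr p)) powr (1 / p)"
    using st mart unfolding strong_mart_type_def by blast
  have Tm: "T (- x) = - T x" using bl by (simp add: linear_simps)
  have I1: "integral {0..<1} (\<lambda>t. norm (z + T (d 1 t)) powr p)
      = (norm (z + T x) powr p + norm (z - T x) powr p) / 2"
  proof -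
    have "integral {0..<1} (\<lambda>t. norm (z + T (d 1 t)) powr p)
        = (\<Sum>i<2^1. (1/2^1) *\<^sub>R norm (z + T (d 1 (real i / 2^1))) powr p)"
      using const_lvl_integral[OF const_lvl_comp[OF c1, of "\<lambda>v. norm (z + T v) powr p"]]
      by (rule integral_unique)
    also have "\<dots> = (norm (z + T x) powr p + norm (z - T x) powr p) / 2"
      using d0 d1 Tm by (simp add: numeral_2_eq_2)
    finally show ?thesis .
  qed
  have I2: "Lp_norm p (d 1) powr p = norm x powr p"
  proof -
    have "Lp_norm p (d 1) powr p = integral {0..<1} (\<lambda>t. norm (d 1 t) powr p)"
      using Lp_pow[OF c1] p by simp
    also have "\<dots> = (\<Sum>i<2^1. (1/2^1) *\<^sub>R norm (d 1 (real i / 2^1)) powr p)"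
      using const_lvl_integral[OF const_lvl_comp[OF c1, of "\<lambda>v. norm v powr p"]]
      by (rule integral_unique)
    also have "\<dots> = norm x powr p"
      using d0 d1 by (simp add: numeral_2_eq_2)
    finally show ?thesis .
  qed
  have nnA: "0 \<le> (norm (z + T x) powr p + norm (z - T x) powr p) / 2" by simp
  have nnB: "0 \<le> norm z powr p + c powr p * norm x powr p" by simp
  have L': "integral {0..<1} (\<lambda>t. norm (z + T (d 1 t)) powr p) powr (1/p)
      \<le> (norm z powr p + c powr p * Lp_norm p (d 1) powr p) powr (1/p)"
    using L unfolding Lp_norm_def[of p "\<lambda>t. z + (\<Sum>k=1..1. T (d k t))"] by simp
  then have "((norm (z + T x) powr p + norm (z - T x) powr p) / 2) powr (1/p)
      \<le> (norm z powr p + c powr p * norm x powr p) powr (1/p)"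
    unfolding I1 I2 .
  then have "(norm (z + T x) powr p + norm (z - T x) powr p) / 2
     \<le> ((norm z powr p + c powr p * norm x powr p) powr (1/p)) powr p"
    using root_le_iff[of p _ "(norm z powr p + c powr p * norm x powr p) powr (1/p)"] nnA p by simp
  also have "\<dots> = norm z powr p + c powr p * norm x powr p"
    using nnB p by (simp add: powr_powr)
  finally show "(norm (z + T x) powr p + norm (z - T x) powr p) / 2 \<le> norm z powr p + c powr p * norm x powr p" .
qed

theorem theorem2:
  fixes T :: "'a::banach \<Rightarrow> 'b::banach" and p c :: real
  assumes "bounded_linear T" and "1 \<le> p" and "p \<le> 2" and "c > 0"
  shows "unif_p_smooth T p c \<longleftrightarrow> strong_mart_type T p c"
  using forward backward assms by blast

end
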